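(* Let $c_1,\dots,c_l\in\mathbb{R}[z_1,\dots,z_m]$ with $l\ge m$ be the constraint polynomials of a framework (as described in the context), let $\mathbf{R}(z)$ be its $m\times l$ rigidity matrix with entries $\mathbf{R}(z)_{ij}=\partial c_j/\partial z_i$, let $p_1,\dots,p_\mu$ ($\mu=\binom{l}{l-m}$) be all $m\times m$ minors of $\mathbf{R}(z)$, and let $V_1\subset\mathbb{R}^m$ be the shakiness variety, i.e. the common zero set of $p_1,\dots,p_\mu$. Assume $V_1\neq\mathbb{R}^m$. If $X$ is a regular point of $V_1$, then $\operatorname{rk}\mathbf{R}(X)=m-1$; equivalently, at $X$ there is, up to a nonzero scalar factor, exactly one non-trivial infinitesimal (instantaneous) flex, i.e. the space of vectors $v\in\mathbb{R}^m$ with $\nabla c_j(X)\cdot v=0$ for all $j=1,\dots,l$ is one-dimensional.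
   Context: A planar (resp. spatial) bar-joint framework with $w$ joints $X_1,\dots,X_w$ and $e$ bars of prescribed non-zero lengths is described algebraically by unknowns $z_1,\dots,z_m$ (the joint coordinates, $m=2w$ resp. $m=3w$) and $l$ polynomial equations $c_1=\dots=c_l=0$: one quadratic equation per bar (squared distance of its endpoints equals the squared bar length), or a linear equation when a joint is an ideal point, together with 3 (resp. 6) linear equations eliminating the Euclidean isometries (so $l=e+3$ resp. $l=e+6$). Each hypersurface $c_j=0$ is a hyperplane or a regular hyperquadric. Because isometries are eliminated by the linear constraints, every nonzero vector $v$ with $\nabla c_j(X)\cdot v=0$ for all $j$ is a non-trivial infinitesimal flex at the configuration $X$. A point $X\in V_1$ is called regular if the Jacobian matrix of $(p_1,\dots,p_\mu)$ at $X$ has rank equal to $m-\dim_X V_1$ (Jacobian criterion). *)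

theory Defs
  imports "HOL-Analysis.Analysis"
begin

inductive_set poly_fun :: "(real^'m \<Rightarrow> real) set" where
  const: "(\<lambda>z. a) \<in> poly_fun"
| coord: "(\<lambda>z. z $ i) \<in> poly_fun"
| add: "f \<in> poly_fun \<Longrightarrow> g \<in> poly_fun \<Longrightarrow> (\<lambda>z. f z + g z) \<in> poly_fun"
| mult: "f \<in> poly_fun \<Longrightarrow> g \<in> poly_fun \<Longrightarrow> (\<lambda>z. f z * g z) \<in> poly_fun"

definition partial_deriv :: "(real^'m \<Rightarrow> real) \<Rightarrow> 'm \<Rightarrow> real^'m \<Rightarrow> real" where
  "partial_deriv f i z = deriv (\<lambda>t. f (z + t *\<^sub>R axis i 1)) 0"

definition grad :: "(real^'m \<Rightarrow> real) \<Rightarrow> real^'m \<Rightarrow> real^'m" where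
  "grad f z = (\<chi> i. partial_deriv f i z)"

definition rigidity_matrix :: "nat \<Rightarrow> (nat \<Rightarrow> real^'m \<Rightarrow> real) \<Rightarrow> real^'m \<Rightarrow> 'm \<Rightarrow> nat \<Rightarrow> real" where
  "rigidity_matrix l c z i j = partial_deriv (c j) i z"

definition rigidity_rank :: "nat \<Rightarrow> (nat \<Rightarrow> real^'m \<Rightarrow> real) \<Rightarrow> real^'m \<Rightarrow> nat" where
  "rigidity_rank l c z = dim (span {(\<chi> i. rigidity_matrix l c z i j) | j. j < l})"

text \<open>The m x m minors of R(z): determinants of the submatrices formed by m distinct columns
  (all column choices and orderings; this lists each minor p_1..p_mu up to sign and repetition).\<close>
definition maximal_minors :: "nat \<Rightarrow> (nat \<Rightarrow> real^'m \<Rightarrow> real) \<Rightarrow> (real^'m \<Rightarrow> real) set" where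
  "maximal_minors l c =
     {(\<lambda>z. det (\<chi> i k. rigidity_matrix l c z i (col k))) | col :: 'm \<Rightarrow> nat. inj col \<and> (\<forall>k. col k < l)}"

definition shakiness_variety :: "nat \<Rightarrow> (nat \<Rightarrow> real^'m \<Rightarrow> real) \<Rightarrow> (real^'m) set" where
  "shakiness_variety l c = {z. \<forall>p \<in> maximal_minors l c. p z = 0}"

definition set_dim :: "(real^'m) set \<Rightarrow> nat" where
  "set_dim S = Max {d. \<exists>(T::(real^'m) set) U W. subspace T \<and> dim T = d \<and> U \<noteq> {} \<and>
                        openin (top_of_set T) U \<and> W \<subseteq> S \<and> U homeomorphic W}"

definition local_dim :: "(real^'m) set \<Rightarrow> real^'m \<Rightarrow> nat" where
  "local_dim V X = (LEAST d. \<exists>e>0. set_dim (V \<inter> ball X e) = d)"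

text \<open>Regular point (Jacobian criterion): the Jacobian of the polynomials P at X has
  rank m - dim_X V.\<close>
definition regular_point :: "(real^'m) set \<Rightarrow> (real^'m \<Rightarrow> real) set \<Rightarrow> real^'m \<Rightarrow> bool" where
  "regular_point V P X \<longleftrightarrow> X \<in> V \<and>
     dim (span {grad p X | p. p \<in> P}) = CARD('m) - local_dim V X"

end

theory Submission
  imports Defs "HOL-Computational_Algebra.Polynomial"
begin

lemma poly_fun_line_deriv:
  assumes "f \<in> poly_fun"
  shows "\<exists>g\<in>poly_fun. \<forall>z. ((\<lambda>t. f (z + t *\<^sub>R w)) has_real_derivative g z) (at 0)"
  using assms
proof induction
  case (const a)
  then show ?case by (intro bexI[of _ "\<lambda>z. 0"]) (auto intro: poly_fun.const)
next
  case (coord i)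
  show ?case
  proof (intro bexI[of _ "\<lambda>z. w $ i"] allI)
    fix z :: "real^'a"
    show "((\<lambda>t. (z + t *\<^sub>R w) $ i) has_real_derivative w $ i) (at 0)"
      by (auto intro!: derivative_eq_intros)
  qed (rule poly_fun.const)
next
  case (add f g)
  then obtain f' g' where f': "f' \<in> poly_fun" "\<forall>z. ((\<lambda>t. f (z + t *\<^sub>R w)) has_real_derivative f' z) (at 0)"
    and g': "g' \<in> poly_fun" "\<forall>z. ((\<lambda>t. g (z + t *\<^sub>R w)) has_real_derivative g' z) (at 0)" by blast
  show ?case
    by (intro bexI[of _ "\<lambda>z. f' z + g' z"] allI DERIV_add poly_fun.add) (use f' g' in auto)
next
  case (mult f g)
  then obtain f' g' where f': "f' \<in> poly_fun" "\<forall>z. ((\<lambda>t. f (z + t *\<^sub>R w)) has_real_derivative f' z) (at 0)"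
    and g': "g' \<in> poly_fun" "\<forall>z. ((\<lambda>t. g (z + t *\<^sub>R w)) has_real_derivative g' z) (at 0)" by blast
  show ?case
  proof (intro bexI[of _ "\<lambda>z. f' z * g z + f z * g' z"] allI)
    fix z
    show "((\<lambda>t. f (z + t *\<^sub>R w) * g (z + t *\<^sub>R w)) has_real_derivative f' z * g z + f z * g' z) (at 0)"
      using DERIV_mult[OF f'(2)[rule_format, of z] g'(2)[rule_format, of z]] by (simp add: mult.commute)
  qed (intro poly_fun.add poly_fun.mult f' g' mult)+
qed

lemma partial_deriv_poly_fun:
  assumes "f \<in> poly_fun"
  shows "partial_deriv f i \<in> poly_fun"
proof -
  obtain g where g: "g \<in> poly_fun" "\<forall>z. ((\<lambda>t. f (z + t *\<^sub>R axis i 1)) has_real_derivative g z) (at 0)"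
    using poly_fun_line_deriv[OF assms, of "axis i 1"] by blast
  have "partial_deriv f i = g"
    unfolding partial_deriv_def using g(2) DERIV_imp_deriv by blast
  with g show ?thesis by simp
qed

lemma poly_fun_sum:
  assumes "finite A" "\<And>a. a \<in> A \<Longrightarrow> f a \<in> poly_fun"
  shows "(\<lambda>z. \<Sum>a\<in>A. f a z) \<in> poly_fun"
  using assms
proof (induction A rule: finite_induct)
  case empty
  then show ?case using poly_fun.const[of 0] by simp
next
  case (insert x F)
  then show ?case using poly_fun.add[of "f x" "\<lambda>z. \<Sum>a\<in>F. f a z"] by simp
qed

lemma poly_fun_prod:
  assumes "finite A" "\<And>a. a \<in> A \<Longrightarrow> f a \<in> poly_fun"
  shows "(\<lambda>z. \<Prod>a\<in>A. f a z) \<in> poly_fun"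
  using assms
proof (induction A rule: finite_induct)
  case empty
  then show ?case using poly_fun.const[of 1] by simp
next
  case (insert x F)
  then show ?case using poly_fun.mult[of "f x" "\<lambda>z. \<Prod>a\<in>F. f a z"] by simp
qed

lemma poly_fun_det:
  fixes M :: "'n::finite \<Rightarrow> 'n \<Rightarrow> real^'m \<Rightarrow> real"
  assumes "\<And>i k. M i k \<in> poly_fun"
  shows "(\<lambda>z. det (\<chi> i k. M i k z)) \<in> poly_fun"
proof -
  have "(\<lambda>z. \<Sum>p\<in>{p. p permutes (UNIV::'n set)}. of_int (sign p) * (\<Prod>i\<in>UNIV. M i (p i) z)) \<in> poly_fun"
    by (intro poly_fun_sum poly_fun.mult poly_fun.const poly_fun_prod assms) (auto simp: finite_permutations)
  then show ?thesis unfolding det_def by simp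
qed

lemma poly_fun_line:
  assumes "f \<in> poly_fun"
  shows "\<exists>q. \<forall>t. f (a + t *\<^sub>R w) = poly q t"
  using assms
proof induction
  case (const b)
  then show ?case by (intro exI[of _ "[:b:]"]) auto
next
  case (coord i)
  then show ?case by (intro exI[of _ "[:a $ i, w $ i:]"]) (auto simp: algebra_simps)
next
  case (add f g)
  then obtain p q where "\<forall>t. f (a + t *\<^sub>R w) = poly p t" "\<forall>t. g (a + t *\<^sub>R w) = poly q t" by blast
  then show ?case by (intro exI[of _ "p + q"]) auto
next
  case (mult f g)
  then obtain p q where "\<forall>t. f (a + t *\<^sub>R w) = poly p t" "\<forall>t. g (a + t *\<^sub>R w) = poly q t" by blast
  then show ?case by (intro exI[of _ "p * q"]) auto
qed

lemma poly_fun_zero_ball: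
  assumes "f \<in> poly_fun" "r > 0" "\<And>y. y \<in> ball a r \<Longrightarrow> f y = 0"
  shows "f z = 0"
proof -
  define w where "w = z - a"
  obtain q where q: "\<forall>t. f (a + t *\<^sub>R w) = poly q t" using poly_fun_line[OF assms(1)] by blast
  define d where "d = r / (norm w + 1)"
  have d: "d > 0" using assms(2) unfolding d_def by (intro divide_pos_pos) (auto intro: add_nonneg_pos)
  have "{0..d/2} \<subseteq> {t. poly q t = 0}"
  proof
    fix t assume t: "t \<in> {0..d/2}"
    have "norm (t *\<^sub>R w) = t * norm w" using t by simp
    also have "\<dots> \<le> d/2 * norm w" using t by (intro mult_right_mono) auto
    also have "\<dots> < r"
    proof -
      have "r * norm w < r * (norm w + 1)" using assms(2) by simp
      then have "d * norm w < r" unfolding d_def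
        by (simp add: pos_divide_less_eq add_nonneg_pos)
      moreover have "d/2 * norm w \<le> d * norm w" using d by (simp add: mult_right_mono)
      ultimately show ?thesis by linarith
    qed
    finally have "a + t *\<^sub>R w \<in> ball a r" by (simp add: dist_norm)
    then show "t \<in> {t. poly q t = 0}" using assms(3) q by (metis mem_Collect_eq)
  qed
  moreover have "infinite {0..d/2}" using d by simp
  ultimately have "q = 0" using poly_roots_finite finite_subset by blast
  then show ?thesis using q[rule_format, of 1] by (simp add: w_def)
qed

lemma det_deriv:
  fixes F :: "real \<Rightarrow> real^'n^'n" and F' :: "real^'n^'n"
  assumes d: "\<And>i k. ((\<lambda>t. F t $ i $ k) has_real_derivative F' $ i $ k) (at 0)"
  shows "((\<lambda>t. det (F t)) has_real_derivative
           (\<Sum>i\<in>UNIV. det (\<chi> r. if r = i then F' $ i else F 0 $ r))) (at 0)"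
proof -
  define P where "P = {p. p permutes (UNIV::'n set)}"
  define D where "D p = (\<Sum>i\<in>UNIV. F' $ i $ p i * (\<Prod>j\<in>UNIV - {i}. F 0 $ j $ p j))" for p
  have pd: "((\<lambda>t. \<Prod>i\<in>UNIV. F t $ i $ p i) has_real_derivative D p) (at 0)" for p
  proof -
    have "((\<lambda>t. \<Prod>i\<in>UNIV. F t $ i $ p i) has_derivative
        (\<lambda>y. \<Sum>i\<in>UNIV. (\<lambda>y. F' $ i $ p i * y) y * (\<Prod>j\<in>UNIV - {i}. F 0 $ j $ p j))) (at 0)"
      by (rule has_derivative_prod) (use d in \<open>auto simp: has_field_derivative_def\<close>)
    then show ?thesis unfolding has_field_derivative_def D_def
      by (rule has_derivative_eq_rhs) (auto simp: sum_distrib_left sum_distrib_right ac_simps fun_eq_iff)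
  qed
  have "((\<lambda>t. \<Sum>p\<in>P. of_int (sign p) * (\<Prod>i\<in>UNIV. F t $ i $ p i)) has_real_derivative
         (\<Sum>p\<in>P. of_int (sign p) * D p)) (at 0)"
    by (intro DERIV_sum DERIV_cmult pd)
  moreover have "(\<Sum>p\<in>P. of_int (sign p) * D p) = (\<Sum>i\<in>UNIV. det (\<chi> r. if r = i then F' $ i else F 0 $ r))"
  proof -
    have "det (\<chi> r. if r = i then F' $ i else F 0 $ r) =
        (\<Sum>p\<in>P. of_int (sign p) * (F' $ i $ p i * (\<Prod>j\<in>UNIV - {i}. F 0 $ j $ p j)))" for i
    proof -
      have "(\<Prod>j\<in>UNIV. (\<chi> r. if r = i then F' $ i else F 0 $ r) $ j $ p j)
          = F' $ i $ p i * (\<Prod>j\<in>UNIV - {i}. F 0 $ j $ p j)" for p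
      proof -
        have "(\<Prod>j\<in>UNIV. (\<chi> r. if r = i then F' $ i else F 0 $ r) $ j $ p j)
            = (\<chi> r. if r = i then F' $ i else F 0 $ r) $ i $ p i * (\<Prod>j\<in>UNIV - {i}. (\<chi> r. if r = i then F' $ i else F 0 $ r) $ j $ p j)"
          by (rule prod.remove) auto
        also have "\<dots> = F' $ i $ p i * (\<Prod>j\<in>UNIV - {i}. F 0 $ j $ p j)"
          by (auto intro!: prod.cong)
        finally show ?thesis .
      qed
      then show ?thesis unfolding det_def P_def by simp
    qed
    then have "(\<Sum>i\<in>UNIV. det (\<chi> r. if r = i then F' $ i else F 0 $ r)) =
        (\<Sum>i\<in>UNIV. \<Sum>p\<in>P. of_int (sign p) * (F' $ i $ p i * (\<Prod>j\<in>UNIV - {i}. F 0 $ j $ p j)))"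
      by simp
    also have "\<dots> = (\<Sum>p\<in>P. \<Sum>i\<in>UNIV. of_int (sign p) * (F' $ i $ p i * (\<Prod>j\<in>UNIV - {i}. F 0 $ j $ p j)))"
      by (rule sum.swap)
    also have "\<dots> = (\<Sum>p\<in>P. of_int (sign p) * D p)"
      by (simp add: D_def sum_distrib_left)
    finally show ?thesis by simp
  qed
  ultimately show ?thesis unfolding det_def P_def by simp
qed

lemma det_row_replace_zero:
  fixes A :: "real^'n^'n"
  assumes "rank A + 2 \<le> CARD('n)"
  shows "det (\<chi> r. if r = i then v else A $ r) = 0"
proof -
  define B where "B = (\<chi> r. if r = i then v else A $ r)"
  have "rows B \<subseteq> insert v (rows A)"
    by (auto simp: rows_def row_def B_def vec_eq_iff)
  then have "dim (rows B) \<le> dim (insert v (rows A))" by (rule dim_subset)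
  also have "\<dots> \<le> dim (rows A) + 1" by (simp add: dim_insert)
  finally have "rank B < CARD('n)" using assms by (simp add: row_rank_def)
  then show ?thesis unfolding B_def[symmetric] by (simp add: det_eq_0_rank)
qed

lemma local_dim_full:
  fixes V :: "(real^'m) set"
  assumes "X \<in> V" "local_dim V X \<ge> CARD('m)"
  shows "\<exists>a r. r > 0 \<and> ball a r \<subseteq> V"
proof -
  have "\<exists>e>0. set_dim (V \<inter> ball X e) = local_dim V X"
    unfolding local_dim_def by (rule LeastI_ex) (auto intro: exI[of _ 1])
  then obtain e where e: "e > 0" "set_dim (V \<inter> ball X e) = local_dim V X" by blast
  define A where "A = {d. \<exists>(T::(real^'m) set) U W. subspace T \<and> dim T = d \<and> U \<noteq> {} \<and>
                        openin (top_of_set T) U \<and> W \<subseteq> V \<inter> ball X e \<and> U homeomorphic W}"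
  have "A \<subseteq> {..CARD('m)}" unfolding A_def using dim_subset_UNIV_cart by auto
  then have fin: "finite A" by (rule finite_subset) simp
  have "0 \<in> A" unfolding A_def
    apply (rule CollectI, rule exI[of _ "{0}"], rule exI[of _ "{0}"], rule exI[of _ "{X}"])
    using assms(1) e(1) by (auto simp: homeomorphic_finite)
  then have "Max A \<in> A" using fin Max_in by blast
  moreover have "Max A \<ge> CARD('m)" using e(2) assms(2) unfolding set_dim_def A_def by simp
  ultimately have "\<exists>(T::(real^'m) set) U W. subspace T \<and> dim T \<ge> CARD('m) \<and> U \<noteq> {} \<and>
                        openin (top_of_set T) U \<and> W \<subseteq> V \<inter> ball X e \<and> U homeomorphic W"
    unfolding A_def by (smt (verit, best) mem_Collect_eq)
  then obtain T U W where TUW: "subspace (T::(real^'m) set)" "dim T \<ge> CARD('m)" "U \<noteq> {}"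
    "openin (top_of_set T) U" "W \<subseteq> V \<inter> ball X e" "U homeomorphic W"
    by blast
  have "span T = span UNIV"
    by (rule dim_eq_span) (use TUW(2) in auto)
  then have T: "T = UNIV" using TUW(1) by (metis span_eq_iff span_UNIV)
  have oU: "open U" using TUW(4) unfolding T by simp
  obtain f g where fg: "homeomorphism U W f g" using TUW(6) unfolding homeomorphic_def by blast
  have "open (f ` U)"
  proof (rule invariance_of_domain)
    show "continuous_on U f" using fg by (simp add: homeomorphism_def)
    show "inj_on f U" using fg unfolding homeomorphism_def by (metis inj_on_inverseI)
  qed (rule oU)
  moreover have "f ` U = W" using fg by (simp add: homeomorphism_def)
  ultimately have oW: "open W" by simp
  have "W \<noteq> {}" using TUW(3) \<open>f ` U = W\<close> by auto
  then obtain a where "a \<in> W" by blast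
  then obtain r where "r > 0" "ball a r \<subseteq> W" using oW open_contains_ball by blast
  then show ?thesis using TUW(5) by blast
qed

lemma mm_elim:
  assumes "p \<in> maximal_minors l c"
  obtains col :: "'m::finite \<Rightarrow> nat" where "inj col" "\<forall>k. col k < l"
        "p = (\<lambda>z. det (\<chi> i k. rigidity_matrix l c z i (col k)))"
proof -
  from assms have "\<exists>col :: 'm \<Rightarrow> nat. p = (\<lambda>z. det (\<chi> i k. rigidity_matrix l c z i (col k))) \<and> inj col \<and> (\<forall>k. col k < l)"
    unfolding maximal_minors_def by (simp only: mem_Collect_eq)
  then show ?thesis using that by blast
qed

theorem lemma1:
  fixes l :: nat and c :: "nat \<Rightarrow> real^'m \<Rightarrow> real" and X :: "real^'m"
  assumes "\<forall>j<l. c j \<in> poly_fun"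
    and "l \<ge> CARD('m)"
    and "shakiness_variety l c \<noteq> UNIV"
    and "regular_point (shakiness_variety l c) (maximal_minors l c) X"
  shows "rigidity_rank l c X = CARD('m) - 1 \<and>
         dim {v. \<forall>j<l. grad (c j) X \<bullet> v = 0} = 1"
proof -
  define S where "S = {grad (c j) X | j. j < l}"
  define V where "V = shakiness_variety l c"
  have Rcol: "(\<chi> i. rigidity_matrix l c z i j) = grad (c j) z" for z j
    by (simp add: vec_eq_iff grad_def rigidity_matrix_def)
  have rr: "rigidity_rank l c X = dim S"
    unfolding rigidity_rank_def S_def Rcol by simp
  have XV: "X \<in> V" using assms(4) unfolding regular_point_def V_def by simp
  have entpoly: "(\<lambda>z. rigidity_matrix l c z i j) \<in> poly_fun" if "j < l" for i j
    using partial_deriv_poly_fun[of "c j" i] assms(1) that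
    by (simp add: rigidity_matrix_def[abs_def])
  have minpoly: "p \<in> poly_fun" if pm: "p \<in> maximal_minors l c" for p
  proof -
    obtain col :: "'m \<Rightarrow> nat" where col: "inj col" "\<forall>k. col k < l"
      "p = (\<lambda>z. det (\<chi> i k. rigidity_matrix l c z i (col k)))"
      by (rule mm_elim[OF pm])
    show ?thesis unfolding col(3) by (rule poly_fun_det) (use entpoly col(2) in auto)
  qed
  have m1: "CARD('m) \<ge> 1" by (simp add: Suc_leI)
  have up: "dim S \<le> CARD('m) - 1"
  proof (rule ccontr)
    assume "\<not> ?thesis"
    then have dS: "dim S = CARD('m)" using dim_subset_UNIV_cart[of S] m1 by linarith
    obtain B where B: "B \<subseteq> S" "independent B" "S \<subseteq> span B" using maximal_independent_subset by blast
    have cB: "card B = CARD('m)" using dS B dim_unique by (metis dim_eq_card_independent)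
    have fB: "finite B" using B(2) finiteI_independent by blast
    obtain h where h: "bij_betw h (UNIV::'m set) B"
      using finite_same_card_bij[of "UNIV::'m set" B] fB cB by auto
    have "\<forall>k. \<exists>j. j < l \<and> h k = grad (c j) X"
    proof
      fix k
      have "h k \<in> S" using h B(1) bij_betwE by blast
      then show "\<exists>j. j < l \<and> h k = grad (c j) X" unfolding S_def by blast
    qed
    then obtain col where "\<forall>k. col k < l \<and> h k = grad (c (col k)) X" by (rule choice[THEN exE])
    then have col: "\<And>k. col k < l" "\<And>k. h k = grad (c (col k)) X" by auto
    have icol: "inj col"
    proof (rule injI)
      fix k1 k2 assume "col k1 = col k2"
      then have "h k1 = h k2" using col(2) by metis
      then show "k1 = k2" using h unfolding bij_betw_def inj_on_def by blast
    qed
    define A where "A = (\<chi> i k. rigidity_matrix l c X i (col k))"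
    have "column k A = h k" for k
      using Rcol[of X "col k"] col(2)[of k] by (simp add: A_def column_def vec_eq_iff)
    then have "columns A = B" using h unfolding columns_def bij_betw_def by auto
    then have "rank A = CARD('m)" using B(2) cB by (simp add: column_rank_def dim_eq_card_independent)
    then have nz: "det A \<noteq> 0" by (simp add: det_eq_0_rank)
    have mem: "(\<lambda>z. det (\<chi> i k. rigidity_matrix l c z i (col k))) \<in> maximal_minors l c"
      unfolding maximal_minors_def mem_Collect_eq using icol col(1) by (intro exI[of _ col]) simp
    have allm: "\<forall>p\<in>maximal_minors l c. p X = 0"
      using XV unfolding V_def shakiness_variety_def by (simp only: mem_Collect_eq)
    have "det A = 0" using bspec[OF allm mem] unfolding A_def by (simp only:)
    then show False using nz by simp
  qed
  have low: "dim S \<ge> CARD('m) - 1"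
  proof (rule ccontr)
    assume "\<not> ?thesis"
    then have small: "dim S + 2 \<le> CARD('m)" by linarith
    have gz: "grad p X = 0" if pm: "p \<in> maximal_minors l c" for p
    proof -
      obtain col :: "'m \<Rightarrow> nat" where col: "inj col" "\<forall>k. col k < l"
        "p = (\<lambda>z. det (\<chi> i k. rigidity_matrix l c z i (col k)))"
        by (rule mm_elim[OF pm])
      have "partial_deriv p a X = 0" for a
      proof -
        define F where "F t = (\<chi> i k. rigidity_matrix l c (X + t *\<^sub>R axis a 1) i (col k))" for t
        have ex: "\<exists>d. ((\<lambda>t. F t $ i $ k) has_real_derivative d) (at 0)" for i k
        proof -
          obtain g where "\<forall>z. ((\<lambda>t. rigidity_matrix l c (z + t *\<^sub>R axis a 1) i (col k)) has_real_derivative g z) (at 0)"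
            using poly_fun_line_deriv[OF entpoly[OF col(2)[rule_format, of k]], of "axis a 1" i] by blast
          then show "\<exists>d. ((\<lambda>t. F t $ i $ k) has_real_derivative d) (at 0)"
            unfolding F_def by auto
        qed
        define Fd where "Fd i k = (SOME d. ((\<lambda>t. F t $ i $ k) has_real_derivative d) (at 0))" for i k
        have Fd: "((\<lambda>t. F t $ i $ k) has_real_derivative Fd i k) (at 0)" for i k
          unfolding Fd_def by (rule someI_ex[OF ex])
        define F' where "F' = (\<chi> i k. Fd i k)"
        have "((\<lambda>t. det (F t)) has_real_derivative
           (\<Sum>i\<in>UNIV. det (\<chi> r. if r = i then F' $ i else F 0 $ r))) (at 0)"
          by (rule det_deriv) (unfold F'_def vec_lambda_beta, rule Fd)
        moreover have "rank (F 0) \<le> dim S"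
        proof -
          have "columns (F 0) \<subseteq> S"
          proof
            fix x assume "x \<in> columns (F 0)"
            then obtain k where k: "x = column k (F 0)" unfolding columns_def by blast
            have "column k (F 0) = (\<chi> i. rigidity_matrix l c X i (col k))"
              unfolding column_def F_def by simp
            also have "\<dots> = grad (c (col k)) X" by (rule Rcol)
            finally have "x = grad (c (col k)) X" using k by simp
            then show "x \<in> S" unfolding S_def using col(2) by blast
          qed
          then show ?thesis by (simp add: column_rank_def dim_subset)
        qed
        then have "(\<Sum>i\<in>UNIV. det (\<chi> r. if r = i then F' $ i else F 0 $ r)) = 0"
          using small by (intro sum.neutral ballI det_row_replace_zero) simp
        ultimately have "deriv (\<lambda>t. det (F t)) 0 = 0" using DERIV_imp_deriv by fastforce
        then show ?thesis unfolding partial_deriv_def col(3) F_def by simp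
      qed
      then show ?thesis by (simp add: grad_def vec_eq_iff)
    qed
    have sub0: "{grad p X | p. p \<in> maximal_minors l c} \<subseteq> {0}" using gz by auto
    have "dim {grad p X | p. p \<in> maximal_minors l c} \<le> dim {0::real^'m}"
      by (rule dim_subset) (rule sub0)
    then have d0: "dim (span {grad p X | p. p \<in> maximal_minors l c}) = 0" by simp
    have "CARD('m) - local_dim V X = 0"
      using assms(4) d0 unfolding regular_point_def V_def by simp
    then have "local_dim V X \<ge> CARD('m)" by simp
    then obtain a r where ar: "r > 0" "ball a r \<subseteq> V" using local_dim_full[OF XV] by blast
    have "V = UNIV"
    proof -
      have "p z = 0" if pm2: "p \<in> maximal_minors l c" for p z
      proof (rule poly_fun_zero_ball[OF minpoly[OF pm2] ar(1)])
        fix y assume "y \<in> ball a r"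
        then have "y \<in> V" using ar(2) by blast
        then have "\<forall>p\<in>maximal_minors l c. p y = 0"
          unfolding V_def shakiness_variety_def by (simp only: mem_Collect_eq)
        then show "p y = 0" using pm2 by blast
      qed
      then show ?thesis unfolding V_def shakiness_variety_def by blast
    qed
    then show False using assms(3) V_def by simp
  qed
  have rk: "dim S = CARD('m) - 1" using up low by simp
  have e1: "{v. \<forall>j<l. grad (c j) X \<bullet> v = 0} = {y \<in> UNIV. \<forall>x \<in> span S. orthogonal x y}"
  proof (safe, simp)
    fix v x assume v: "\<forall>j<l. grad (c j) X \<bullet> v = 0" and "x \<in> span S"
    have "orthogonal v x"
    proof (rule orthogonal_to_span[OF \<open>x \<in> span S\<close>])
      fix y assume "y \<in> S"
      then obtain j where "j < l" "y = grad (c j) X" unfolding S_def by blast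
      then show "orthogonal v y" using v by (simp add: orthogonal_def inner_commute)
    qed
    then show "orthogonal x v" by (simp add: orthogonal_commute)
  next
    fix v j assume o: "\<forall>x\<in>span S. orthogonal x v" and j: "j < l"
    have "grad (c j) X \<in> S" unfolding S_def using j by blast
    then have "grad (c j) X \<in> span S" by (rule span_base)
    then have "orthogonal (grad (c j) X) v" using o by blast
    then show "grad (c j) X \<bullet> v = 0" unfolding orthogonal_def .
  qed
  have e2: "dim {y \<in> UNIV. \<forall>x \<in> span S. orthogonal x y} + dim (span S) = dim (UNIV :: (real^'m) set)"
    by (rule dim_subspace_orthogonal_to_vectors) auto
  have e3: "dim (UNIV :: (real^'m) set) = CARD('m)" by (simp only: dim_UNIV DIM_cart DIM_real mult_1_right)
  have "dim {v. \<forall>j<l. grad (c j) X \<bullet> v = 0} + dim S = CARD('m)"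
    using e2 unfolding e1[symmetric] e3 dim_span .
  then have d1: "dim {v. \<forall>j<l. grad (c j) X \<bullet> v = 0} = 1" using m1 rk by linarith
  show ?thesis by (intro conjI) (simp only: rr rk, rule d1)
qed

end
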